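(* Let $R$ be a binary relation on $U$. Then $\wp(U)^{\vartriangle}$ is spatial and completely distributive if and only if for every $x\in U$, $R(x)$ is a union of sets $R(y)$ ($y\in U$) each of which is completely join-prime in $\wp(U)^{\vartriangle}$.
   Context: Let $U$ be a set and $R\subseteq U\times U$ a binary relation. For $x\in U$, $R(x)=\{y\in U\mid (x,y)\in R\}$ and $\breve R(x)=\{y\in U\mid (y,x)\in R\}$. For $X\subseteq U$, $X^{\vartriangle}=\{x\in U\mid \breve R(x)\cap X\neq\emptyset\}$ (so $\{x\}^{\vartriangle}=R(x)$), and $\wp(U)^{\vartriangle}=\{X^{\vartriangle}\mid X\subseteq U\}$, a complete lattice under $\subseteq$ in which joins are unions. An element $p$ of a complete lattice $L$ is completely join-prime if $p\le\bigvee Y$ implies $p\le y$ for some $y\in Y$; it is completely join-irreducible if $p=\bigvee Y$ implies $p\in Y$. $L$ is spatial if each element is the join of the completely join-irreducible elements below it, and completely distributive if $\bigwedge_{i\in I}\bigvee_{j\in J}x_{i,j}=\bigvee_{f\colon I\to J}\bigwedge_{i\in I}x_{i,f(i)}$ for all doubly indexed families. *)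

theory Defs
  imports Main
begin

definition rimg :: "'a set \<Rightarrow> ('a \<times> 'a) set \<Rightarrow> 'a \<Rightarrow> 'a set" where
  "rimg U R x = {y \<in> U. (x, y) \<in> R}"

definition tri :: "'a set \<Rightarrow> ('a \<times> 'a) set \<Rightarrow> 'a set \<Rightarrow> 'a set" where
  "tri U R X = {x \<in> U. \<exists>y \<in> X. (y, x) \<in> R}"

definition tri_lattice :: "'a set \<Rightarrow> ('a \<times> 'a) set \<Rightarrow> 'a set set" where
  "tri_lattice U R = {tri U R X | X. X \<subseteq> U}"

definition is_lub :: "'a set set \<Rightarrow> 'a set set \<Rightarrow> 'a set \<Rightarrow> bool" where
  "is_lub L Y s \<longleftrightarrow> s \<in> L \<and> (\<forall>y\<in>Y. y \<subseteq> s) \<and> (\<forall>z\<in>L. (\<forall>y\<in>Y. y \<subseteq> z) \<longrightarrow> s \<subseteq> z)"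

definition is_glb :: "'a set set \<Rightarrow> 'a set set \<Rightarrow> 'a set \<Rightarrow> bool" where
  "is_glb L Y s \<longleftrightarrow> s \<in> L \<and> (\<forall>y\<in>Y. s \<subseteq> y) \<and> (\<forall>z\<in>L. (\<forall>y\<in>Y. z \<subseteq> y) \<longrightarrow> z \<subseteq> s)"

definition Ljoin :: "'a set set \<Rightarrow> 'a set set \<Rightarrow> 'a set" where
  "Ljoin L Y = (THE s. is_lub L Y s)"

definition Lmeet :: "'a set set \<Rightarrow> 'a set set \<Rightarrow> 'a set" where
  "Lmeet L Y = (THE s. is_glb L Y s)"

definition completely_join_prime :: "'a set set \<Rightarrow> 'a set \<Rightarrow> bool" where
  "completely_join_prime L p \<longleftrightarrow>
     p \<in> L \<and> (\<forall>Y. Y \<subseteq> L \<longrightarrow> p \<subseteq> Ljoin L Y \<longrightarrow> (\<exists>y\<in>Y. p \<subseteq> y))"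

definition completely_join_irreducible :: "'a set set \<Rightarrow> 'a set \<Rightarrow> bool" where
  "completely_join_irreducible L p \<longleftrightarrow>
     p \<in> L \<and> (\<forall>Y. Y \<subseteq> L \<longrightarrow> p = Ljoin L Y \<longrightarrow> p \<in> Y)"

definition spatial :: "'a set set \<Rightarrow> bool" where
  "spatial L \<longleftrightarrow>
     (\<forall>x\<in>L. x = Ljoin L {p. completely_join_irreducible L p \<and> p \<subseteq> x})"

text \<open>Complete distributivity. Index sets I, J are subsets of a fixed type
 ('a set set, whose cardinality exceeds that of L); f ranges over maps I \<rightarrow> J.\<close>
definition completely_distributive :: "'a set set \<Rightarrow> bool" where
  "completely_distributive L \<longleftrightarrow>
     (\<forall>(I :: 'a set set set) (J :: 'a set set set) (x :: 'a set set \<Rightarrow> 'a set set \<Rightarrow> 'a set).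
        (\<forall>i\<in>I. \<forall>j\<in>J. x i j \<in> L) \<longrightarrow>
        Lmeet L {Ljoin L {x i j | j. j \<in> J} | i. i \<in> I}
        = Ljoin L {Lmeet L {x i (f i) | i. i \<in> I} | f. (\<forall>i\<in>I. f i \<in> J)})"

end

theory Submission
  imports Defs
begin

lemma memL:
  assumes "R \<subseteq> U \<times> U"
  shows "z \<in> tri_lattice U R \<longleftrightarrow> z \<subseteq> U \<and> (\<forall>x\<in>z. \<exists>w\<in>U. x \<in> rimg U R w \<and> rimg U R w \<subseteq> z)"
proof
  assume "z \<in> tri_lattice U R"
  then obtain X where X: "X \<subseteq> U" "z = tri U R X" by (auto simp: tri_lattice_def)
  then show "z \<subseteq> U \<and> (\<forall>x\<in>z. \<exists>w\<in>U. x \<in> rimg U R w \<and> rimg U R w \<subseteq> z)"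
    using assms by (auto simp: tri_def rimg_def)
next
  assume h: "z \<subseteq> U \<and> (\<forall>x\<in>z. \<exists>w\<in>U. x \<in> rimg U R w \<and> rimg U R w \<subseteq> z)"
  have "z = tri U R {w\<in>U. rimg U R w \<subseteq> z}"
  proof
    show "z \<subseteq> tri U R {w\<in>U. rimg U R w \<subseteq> z}"
    proof
      fix a assume "a \<in> z"
      with h obtain w where "w \<in> U" "a \<in> rimg U R w" "rimg U R w \<subseteq> z" by blast
      then show "a \<in> tri U R {w\<in>U. rimg U R w \<subseteq> z}" by (auto simp: tri_def rimg_def)
    qed
    show "tri U R {w\<in>U. rimg U R w \<subseteq> z} \<subseteq> z"
      by (auto simp: tri_def rimg_def)
  qed
  then show "z \<in> tri_lattice U R" unfolding tri_lattice_def by blast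
qed

lemma Union_L:
  assumes "R \<subseteq> U \<times> U" "Y \<subseteq> tri_lattice U R"
  shows "\<Union>Y \<in> tri_lattice U R"
proof -
  have yy: "y \<subseteq> U \<and> (\<forall>x\<in>y. \<exists>w\<in>U. x \<in> rimg U R w \<and> rimg U R w \<subseteq> y)"
    if "y \<in> Y" for y
  proof -
    have "y \<in> tri_lattice U R" using assms(2) that by (rule subsetD)
    then show ?thesis by (rule iffD1[OF memL[OF assms(1)]])
  qed
  have "\<Union>Y \<subseteq> U \<and> (\<forall>x\<in>\<Union>Y. \<exists>w\<in>U. x \<in> rimg U R w \<and> rimg U R w \<subseteq> \<Union>Y)"
  proof (intro conjI ballI)
    show "\<Union>Y \<subseteq> U" using yy by blast
    fix x assume "x \<in> \<Union>Y"
    then obtain y where "y \<in> Y" "x \<in> y" by blast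
    then obtain w where "w \<in> U" "x \<in> rimg U R w" "rimg U R w \<subseteq> y" using yy by blast
    then show "\<exists>w\<in>U. x \<in> rimg U R w \<and> rimg U R w \<subseteq> \<Union>Y" using \<open>y \<in> Y\<close> by blast
  qed
  then show ?thesis by (rule iffD2[OF memL[OF assms(1)]])
qed

lemma rimg_L:
  assumes "R \<subseteq> U \<times> U" "w \<in> U"
  shows "rimg U R w \<in> tri_lattice U R"
proof -
  have "rimg U R w \<subseteq> U" by (auto simp: rimg_def)
  moreover have "\<forall>x\<in>rimg U R w. \<exists>w'\<in>U. x \<in> rimg U R w' \<and> rimg U R w' \<subseteq> rimg U R w"
    using assms(2) by blast
  ultimately show ?thesis by (intro iffD2[OF memL[OF assms(1)]] conjI)
qed

lemma Ljoin_eq: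
  assumes "R \<subseteq> U \<times> U" "Y \<subseteq> tri_lattice U R"
  shows "Ljoin (tri_lattice U R) Y = \<Union>Y"
  unfolding Ljoin_def
proof (rule the_equality)
  show "is_lub (tri_lattice U R) Y (\<Union> Y)"
    using Union_L[OF assms] by (auto simp: is_lub_def)
  fix s assume "is_lub (tri_lattice U R) Y s"
  then show "s = \<Union>Y" using Union_L[OF assms] unfolding is_lub_def by blast
qed

lemma Lmeet_eq:
  assumes "R \<subseteq> U \<times> U"
  shows "Lmeet (tri_lattice U R) Y = \<Union>{z\<in>tri_lattice U R. \<forall>y\<in>Y. z \<subseteq> y}"
  unfolding Lmeet_def
proof (rule the_equality)
  have G: "\<Union>{z\<in>tri_lattice U R. \<forall>y\<in>Y. z \<subseteq> y} \<in> tri_lattice U R"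
    by (rule Union_L[OF assms]) blast
  then show "is_glb (tri_lattice U R) Y (\<Union>{z\<in>tri_lattice U R. \<forall>y\<in>Y. z \<subseteq> y})"
    by (auto simp: is_glb_def)
  fix s assume "is_glb (tri_lattice U R) Y s"
  then show "s = \<Union>{z\<in>tri_lattice U R. \<forall>y\<in>Y. z \<subseteq> y}" using G unfolding is_glb_def by blast
qed

lemma Lmeet_in:
  assumes "R \<subseteq> U \<times> U"
  shows "Lmeet (tri_lattice U R) Y \<in> tri_lattice U R"
  unfolding Lmeet_eq[OF assms] by (rule Union_L[OF assms]) blast

lemma Lmeet_le:
  assumes "R \<subseteq> U \<times> U" "y \<in> Y"
  shows "Lmeet (tri_lattice U R) Y \<subseteq> y"
  unfolding Lmeet_eq[OF assms(1)] using assms(2) by blast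

lemma Lmeet_greatest:
  assumes "R \<subseteq> U \<times> U" "z \<in> tri_lattice U R" "\<forall>y\<in>Y. z \<subseteq> y"
  shows "z \<subseteq> Lmeet (tri_lattice U R) Y"
  unfolding Lmeet_eq[OF assms(1)] using assms(2,3) by blast

lemma cjp_cji:
  assumes "R \<subseteq> U \<times> U" "completely_join_prime (tri_lattice U R) p"
  shows "completely_join_irreducible (tri_lattice U R) p"
  unfolding completely_join_irreducible_def
proof (intro conjI allI impI)
  show "p \<in> tri_lattice U R" using assms(2) by (simp add: completely_join_prime_def)
  fix Y assume Y: "Y \<subseteq> tri_lattice U R" and pe: "p = Ljoin (tri_lattice U R) Y"
  then obtain y where "y \<in> Y" "p \<subseteq> y" using assms(2) unfolding completely_join_prime_def by blast
  moreover have "y \<subseteq> p" using pe Ljoin_eq[OF assms(1) Y] \<open>y \<in> Y\<close> by blast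
  ultimately show "p \<in> Y" by auto
qed

lemma CD_cji_cjp:
  assumes RU: "R \<subseteq> U \<times> U" and CD: "completely_distributive (tri_lattice U R)"
    and cji: "completely_join_irreducible (tri_lattice U R) p"
  shows "completely_join_prime (tri_lattice U R) p"
  unfolding completely_join_prime_def
proof (intro conjI allI impI)
  let ?L = "tri_lattice U R"
  show pL: "p \<in> ?L" using cji by (simp add: completely_join_irreducible_def)
  fix Y assume YL: "Y \<subseteq> ?L" and pY: "p \<subseteq> Ljoin ?L Y"
  have pU: "p \<subseteq> \<Union>Y" using pY Ljoin_eq[OF RU YL] by simp
  show "\<exists>y\<in>Y. p \<subseteq> y"
  proof (cases "Y = {}")
    case True
    then have "p = Ljoin ?L {}" using pU Ljoin_eq[OF RU, of "{}"] by simp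
    then have "p \<in> {}" using cji unfolding completely_join_irreducible_def by blast
    then show ?thesis by simp
  next
    case False
    define I :: "'a set set set" where "I = {{}, UNIV}"
    define J :: "'a set set set" where "J = (\<lambda>y. {y}) ` Y"
    define x :: "'a set set \<Rightarrow> 'a set set \<Rightarrow> 'a set" where
      "x = (\<lambda>i j. if i = {} then p else \<Union>j)"
    have ne: "(UNIV :: 'a set set) \<noteq> {}" by simp
    have xL: "\<forall>i\<in>I. \<forall>j\<in>J. x i j \<in> ?L"
      using pL YL ne unfolding I_def J_def x_def by auto
    have eq: "Lmeet ?L {Ljoin ?L {x i j | j. j \<in> J} | i. i \<in> I}
        = Ljoin ?L {Lmeet ?L {x i (f i) | i. i \<in> I} | f. (\<forall>i\<in>I. f i \<in> J)}"
      using CD xL unfolding completely_distributive_def by blast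
    have s1: "{x {} j | j. j \<in> J} = {p}" using False unfolding x_def J_def by auto
    have s2: "{x UNIV j | j. j \<in> J} = Y" using ne unfolding x_def J_def by auto
    have s3: "{Ljoin ?L {x i j | j. j \<in> J} | i. i \<in> I} = {Ljoin ?L {p}, Ljoin ?L Y}"
    proof -
      have "{Ljoin ?L {x i j | j. j \<in> J} | i. i \<in> I}
          = {Ljoin ?L {x {} j | j. j \<in> J}, Ljoin ?L {x UNIV j | j. j \<in> J}}"
        unfolding I_def by blast
      then show ?thesis by (simp only: s1 s2)
    qed
    have "Ljoin ?L {p} = p" using Ljoin_eq[OF RU, of "{p}"] pL by simp
    then have s4: "{Ljoin ?L {x i j | j. j \<in> J} | i. i \<in> I} = {p, \<Union>Y}"
      using s3 Ljoin_eq[OF RU YL] by simp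
    have lhs: "Lmeet ?L {p, \<Union>Y} = p"
    proof
      show "Lmeet ?L {p, \<Union>Y} \<subseteq> p" by (rule Lmeet_le[OF RU]) simp
      show "p \<subseteq> Lmeet ?L {p, \<Union>Y}" using Lmeet_greatest[OF RU pL] pU by simp
    qed
    define S where "S = {Lmeet ?L {x i (f i) | i. i \<in> I} | f. (\<forall>i\<in>I. f i \<in> J)}"
    have SL: "S \<subseteq> ?L" unfolding S_def using Lmeet_in[OF RU] by blast
    have "p = Ljoin ?L S" using eq s4 lhs unfolding S_def by simp
    moreover have cjiY: "\<forall>Y. Y \<subseteq> ?L \<longrightarrow> p = Ljoin ?L Y \<longrightarrow> p \<in> Y"
      using cji by (simp add: completely_join_irreducible_def)
    ultimately have "p \<in> S" using SL by (simp only: cjiY[rule_format])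
    then obtain f where f: "\<forall>i\<in>I. f i \<in> J" and pf: "p = Lmeet ?L {x i (f i) | i. i \<in> I}"
      unfolding S_def by blast
    have "UNIV \<in> I" unfolding I_def by simp
    then have "p \<subseteq> x UNIV (f UNIV)" unfolding pf by (intro Lmeet_le[OF RU]) blast
    moreover obtain y where "y \<in> Y" "f UNIV = {y}" using f \<open>UNIV \<in> I\<close> unfolding J_def by blast
    moreover have "x UNIV (f UNIV) = y" using ne \<open>f UNIV = {y}\<close> unfolding x_def by simp
    ultimately show ?thesis by auto
  qed
qed

theorem mainTheorem17:
  fixes U :: "'a set" and R :: "('a \<times> 'a) set"
  assumes "R \<subseteq> U \<times> U"
  shows "(spatial (tri_lattice U R) \<and> completely_distributive (tri_lattice U R)) \<longleftrightarrow>
         (\<forall>x\<in>U. \<exists>S\<subseteq>U. rimg U R x = (\<Union>y\<in>S. rimg U R y) \<and>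
                        (\<forall>y\<in>S. completely_join_prime (tri_lattice U R) (rimg U R y)))"
proof
  let ?L = "tri_lattice U R"
  note RU = assms
  assume h: "spatial ?L \<and> completely_distributive ?L"
  show "\<forall>x\<in>U. \<exists>S\<subseteq>U. rimg U R x = (\<Union>y\<in>S. rimg U R y) \<and>
                        (\<forall>y\<in>S. completely_join_prime ?L (rimg U R y))"
  proof
    fix x assume xU: "x \<in> U"
    define S where "S = {y\<in>U. rimg U R y \<subseteq> rimg U R x \<and> completely_join_prime ?L (rimg U R y)}"
    have "rimg U R x \<subseteq> (\<Union>y\<in>S. rimg U R y)"
    proof
      fix z assume z: "z \<in> rimg U R x"
      have PL: "{p. completely_join_irreducible ?L p \<and> p \<subseteq> rimg U R x} \<subseteq> ?L"
        unfolding completely_join_irreducible_def by blast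
      have spx: "rimg U R x = Ljoin ?L {p. completely_join_irreducible ?L p \<and> p \<subseteq> rimg U R x}"
        using bspec[OF h[THEN conjunct1, unfolded spatial_def] rimg_L[OF RU xU]] .
      have jx: "Ljoin ?L {p. completely_join_irreducible ?L p \<and> p \<subseteq> rimg U R x}
          = \<Union>{p. completely_join_irreducible ?L p \<and> p \<subseteq> rimg U R x}"
        by (rule Ljoin_eq[OF RU PL])
      have "z \<in> \<Union>{p. completely_join_irreducible ?L p \<and> p \<subseteq> rimg U R x}"
        using z spx jx by metis
      then obtain p where p: "completely_join_irreducible ?L p" "p \<subseteq> rimg U R x" "z \<in> p"
        by blast
      have cjp: "completely_join_prime ?L p" using CD_cji_cjp[OF RU _ p(1)] h by blast
      then have pL: "p \<in> ?L" by (simp add: completely_join_prime_def)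
      define Yp where "Yp = {rimg U R w | w. w \<in> U \<and> rimg U R w \<subseteq> p}"
      have YpL: "Yp \<subseteq> ?L" unfolding Yp_def using rimg_L[OF RU] by blast
      have pm: "\<forall>a\<in>p. \<exists>w\<in>U. a \<in> rimg U R w \<and> rimg U R w \<subseteq> p"
        using iffD1[OF memL[OF RU] pL] by blast
      have "p \<subseteq> \<Union>Yp"
      proof
        fix a assume "a \<in> p"
        then obtain w where "w \<in> U" "a \<in> rimg U R w" "rimg U R w \<subseteq> p" using pm by blast
        then show "a \<in> \<Union>Yp" unfolding Yp_def by blast
      qed
      then have "p \<subseteq> Ljoin ?L Yp" using Ljoin_eq[OF RU YpL] by simp
      then obtain q where "q \<in> Yp" "p \<subseteq> q" using cjp YpL unfolding completely_join_prime_def by blast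
      then obtain w where w0: "w \<in> U" "q = rimg U R w" "rimg U R w \<subseteq> p" unfolding Yp_def by blast
      then have w: "w \<in> U" "rimg U R w = p" using \<open>p \<subseteq> q\<close> by auto
      then have "w \<in> S" unfolding S_def using p cjp by auto
      then show "z \<in> (\<Union>y\<in>S. rimg U R y)" using w p by blast
    qed
    moreover have "(\<Union>y\<in>S. rimg U R y) \<subseteq> rimg U R x" unfolding S_def by blast
    ultimately show "\<exists>S\<subseteq>U. rimg U R x = (\<Union>y\<in>S. rimg U R y) \<and>
                        (\<forall>y\<in>S. completely_join_prime ?L (rimg U R y))"
    proof (intro exI[of _ S] conjI)
      show "S \<subseteq> U" unfolding S_def by blast
      show "\<forall>y\<in>S. completely_join_prime ?L (rimg U R y)" unfolding S_def by blast
    qed (blast+)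
  qed
next
  let ?L = "tri_lattice U R"
  note RU = assms
  assume H: "\<forall>x\<in>U. \<exists>S\<subseteq>U. rimg U R x = (\<Union>y\<in>S. rimg U R y) \<and>
                        (\<forall>y\<in>S. completely_join_prime ?L (rimg U R y))"
  have K: "\<exists>w\<in>U. a \<in> rimg U R w \<and> rimg U R w \<subseteq> z \<and> completely_join_prime ?L (rimg U R w)"
    if zaL: "z \<in> ?L" "a \<in> z" for z a
  proof -
    have zm: "z \<subseteq> U \<and> (\<forall>x\<in>z. \<exists>w\<in>U. x \<in> rimg U R w \<and> rimg U R w \<subseteq> z)"
      by (rule iffD1[OF memL[OF RU] zaL(1)])
    obtain w0 where w0: "w0 \<in> U" "a \<in> rimg U R w0" "rimg U R w0 \<subseteq> z"
      using zm zaL(2) by blast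
    obtain S where S: "S \<subseteq> U" "rimg U R w0 = (\<Union>y\<in>S. rimg U R y)"
      "\<forall>y\<in>S. completely_join_prime ?L (rimg U R y)" using bspec[OF H w0(1)] by blast
    then obtain y where "y \<in> S" "a \<in> rimg U R y" using w0(2) by blast
    have "rimg U R y \<subseteq> (\<Union>y\<in>S. rimg U R y)" using \<open>y \<in> S\<close> by blast
    also have "\<dots> = rimg U R w0" using S(2) by (rule sym)
    finally have "rimg U R y \<subseteq> z" using w0(3) by (rule subset_trans)
    then show ?thesis using S(1,3) \<open>y \<in> S\<close> \<open>a \<in> rimg U R y\<close> by blast
  qed
  have sp: "spatial ?L"
    unfolding spatial_def
  proof
    fix z assume zL: "z \<in> ?L"
    have PL: "{p. completely_join_irreducible ?L p \<and> p \<subseteq> z} \<subseteq> ?L"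
      unfolding completely_join_irreducible_def by blast
    have "z \<subseteq> \<Union>{p. completely_join_irreducible ?L p \<and> p \<subseteq> z}"
    proof
      fix a assume "a \<in> z"
      then obtain w where "a \<in> rimg U R w" "rimg U R w \<subseteq> z" "completely_join_prime ?L (rimg U R w)"
        using K zL by blast
      then show "a \<in> \<Union>{p. completely_join_irreducible ?L p \<and> p \<subseteq> z}"
        using cjp_cji[OF RU] by blast
    qed
    then show "z = Ljoin ?L {p. completely_join_irreducible ?L p \<and> p \<subseteq> z}"
      using Ljoin_eq[OF RU PL] by auto
  qed
  have cd: "completely_distributive ?L"
    unfolding completely_distributive_def
  proof (intro allI impI)
    fix I J :: "'a set set set" and x :: "'a set set \<Rightarrow> 'a set set \<Rightarrow> 'a set"
    assume xL: "\<forall>i\<in>I. \<forall>j\<in>J. x i j \<in> ?L"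
    have AL: "{x i j | j. j \<in> J} \<subseteq> ?L" if "i \<in> I" for i using xL that by blast
    have Aeq: "Ljoin ?L {x i j | j. j \<in> J} = \<Union>{x i j | j. j \<in> J}" if "i \<in> I" for i
      using Ljoin_eq[OF RU AL[OF that]] .
    define LHS where "LHS = Lmeet ?L {Ljoin ?L {x i j | j. j \<in> J} | i. i \<in> I}"
    define S where "S = {Lmeet ?L {x i (f i) | i. i \<in> I} | f. (\<forall>i\<in>I. f i \<in> J)}"
    have SL: "S \<subseteq> ?L" unfolding S_def using Lmeet_in[OF RU] by blast
    have LHSL: "LHS \<in> ?L" unfolding LHS_def by (rule Lmeet_in[OF RU])
    have "\<Union>S \<subseteq> LHS"
    proof
      fix a assume "a \<in> \<Union>S"
      then obtain f where f: "\<forall>i\<in>I. f i \<in> J" and a: "a \<in> Lmeet ?L {x i (f i) | i. i \<in> I}"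
        unfolding S_def by blast
      have "Lmeet ?L {x i (f i) | i. i \<in> I} \<subseteq> LHS"
        unfolding LHS_def
      proof (rule Lmeet_greatest[OF RU Lmeet_in[OF RU]], rule ballI)
        fix y assume "y \<in> {Ljoin ?L {x i j | j. j \<in> J} | i. i \<in> I}"
        then obtain i where i: "i \<in> I" and yi: "y = Ljoin ?L {x i j | j. j \<in> J}" by blast
        have "Lmeet ?L {x i (f i) | i. i \<in> I} \<subseteq> x i (f i)" using i by (intro Lmeet_le[OF RU]) blast
        also have "\<dots> \<subseteq> Ljoin ?L {x i j | j. j \<in> J}" unfolding Aeq[OF i] using f i by blast
        finally show "Lmeet ?L {x i (f i) | i. i \<in> I} \<subseteq> y" unfolding yi .
      qed
      then show "a \<in> LHS" using a by blast
    qed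
    moreover have "LHS \<subseteq> \<Union>S"
    proof
      fix a assume a: "a \<in> LHS"
      then obtain w where w: "w \<in> U" "a \<in> rimg U R w" "rimg U R w \<subseteq> LHS"
        "completely_join_prime ?L (rimg U R w)" using K LHSL by blast
      have ex: "\<exists>j. j \<in> J \<and> rimg U R w \<subseteq> x i j" if i: "i \<in> I" for i
      proof -
        have "LHS \<subseteq> Ljoin ?L {x i j | j. j \<in> J}" unfolding LHS_def
          using i by (intro Lmeet_le[OF RU]) blast
        then have "rimg U R w \<subseteq> Ljoin ?L {x i j | j. j \<in> J}" using w(3) by blast
        then obtain y where "y \<in> {x i j | j. j \<in> J}" "rimg U R w \<subseteq> y"
          using w(4) AL[OF i] unfolding completely_join_prime_def by blast
        then show ?thesis by blast
      qed
      define f where "f = (\<lambda>i. SOME j. j \<in> J \<and> rimg U R w \<subseteq> x i j)"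
      have f: "f i \<in> J \<and> rimg U R w \<subseteq> x i (f i)" if "i \<in> I" for i
        unfolding f_def using someI_ex[OF ex[OF that]] .
      have "rimg U R w \<subseteq> Lmeet ?L {x i (f i) | i. i \<in> I}"
        using f by (intro Lmeet_greatest[OF RU rimg_L[OF RU w(1)]]) blast
      moreover have "Lmeet ?L {x i (f i) | i. i \<in> I} \<in> S" unfolding S_def using f by blast
      ultimately show "a \<in> \<Union>S" using w(2) by blast
    qed
    ultimately have "LHS = \<Union>S" by blast
    then have "LHS = Ljoin ?L S" using Ljoin_eq[OF RU SL] by simp
    then show "Lmeet ?L {Ljoin ?L {x i j | j. j \<in> J} | i. i \<in> I}
        = Ljoin ?L {Lmeet ?L {x i (f i) | i. i \<in> I} | f. (\<forall>i\<in>I. f i \<in> J)}"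
      by (simp only: LHS_def S_def)
  qed
  show "spatial ?L \<and> completely_distributive ?L" using sp cd by blast
qed

end
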